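(* Let $\overrightarrow{C}=\bigcup_{j=1}^t m_j\overrightarrow{C_{n_j}}$ be a $\Theta$-oriented 2-regular graph with at least two cycle components (where $n_1<\dots<n_t$ are the distinct cycle lengths, $m_j\ge1$, $\sum_j m_j\ge2$), and let $D$ be a distance set of $\overrightarrow{C}$. Then $\overrightarrow{C}$ is $D$-antimagic if and only if $\min(D)=0$.
   Context: An oriented graph is a simple graph each of whose edges is given one direction (an arc $(u,v)$ goes from $u$ to $v$). For vertices $u,v$, $d(u,v)$ is the length of a shortest directed path from $u$ to $v$ ($d(u,u)=0$, $\infty$ if no path). A distance set of an oriented graph is a nonempty set $D$ of nonnegative integers each of which is a finite distance $d(u,v)$ for some pair of vertices. $N_D(v)=\{y : d(v,y)\in D\}$; for a bijection $f:V\to\{1,\dots,|V|\}$, $\omega_D(v)=\sum_{x\in N_D(v)}f(x)$ (empty sum $0$); $f$ is $D$-antimagic if distinct vertices have distinct $D$-weights, and the graph is $D$-antimagic if such an $f$ exists. An oriented 2-regular graph is an orientation of a disjoint union of cycles, each of length at least $3$. A cycle component on $v_1,\dots,v_n$ is $\Theta$-oriented if it has exactly one source (in-degree $0$) and exactly one sink (out-degree $0$) and these are adjacent, i.e. up to relabeling its arcs are $(v_i,v_{i+1})$, $1\le i\le n-1$, and $(v_1,v_n)$; the oriented 2-regular graph is $\Theta$-oriented if every cycle component is $\Theta$-oriented. *)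

theory Defs
  imports Main "HOL-Library.Extended_Nat"
begin

definition odist :: "('a \<times> 'a) set \<Rightarrow> 'a \<Rightarrow> 'a \<Rightarrow> enat" where
  "odist A u v = (if (u, v) \<in> A\<^sup>* then enat (LEAST n. (u, v) \<in> A ^^ n) else \<infinity>)"

definition distance_set :: "'a set \<Rightarrow> ('a \<times> 'a) set \<Rightarrow> nat set \<Rightarrow> bool" where
  "distance_set V A D \<longleftrightarrow> D \<noteq> {} \<and>
     (\<forall>k\<in>D. \<exists>u\<in>V. \<exists>v\<in>V. odist A u v = enat k)"

definition D_neighbourhood :: "'a set \<Rightarrow> ('a \<times> 'a) set \<Rightarrow> nat set \<Rightarrow> 'a \<Rightarrow> 'a set" where
  "D_neighbourhood V A D v = {y\<in>V. \<exists>k\<in>D. odist A v y = enat k}"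

definition D_weight :: "'a set \<Rightarrow> ('a \<times> 'a) set \<Rightarrow> nat set \<Rightarrow> ('a \<Rightarrow> nat) \<Rightarrow> 'a \<Rightarrow> nat" where
  "D_weight V A D f v = (\<Sum>x\<in>D_neighbourhood V A D v. f x)"

definition D_antimagic_labeling :: "'a set \<Rightarrow> ('a \<times> 'a) set \<Rightarrow> nat set \<Rightarrow> ('a \<Rightarrow> nat) \<Rightarrow> bool" where
  "D_antimagic_labeling V A D f \<longleftrightarrow>
     bij_betw f V {1..card V} \<and> inj_on (D_weight V A D f) V"

definition D_antimagic :: "'a set \<Rightarrow> ('a \<times> 'a) set \<Rightarrow> nat set \<Rightarrow> bool" where
  "D_antimagic V A D \<longleftrightarrow> (\<exists>f. D_antimagic_labeling V A D f)"

text \<open>Standard model of a Theta-oriented 2-regular graph with cycle lengths ns: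
  component c has vertices (c,0),...,(c,n_c-1) and arcs (c,i)->(c,i+1) and (c,0)->(c,n_c-1).\<close>
definition theta_vertices :: "nat list \<Rightarrow> (nat \<times> nat) set" where
  "theta_vertices ns = {(c, i). c < length ns \<and> i < ns ! c}"

definition theta_arcs :: "nat list \<Rightarrow> ((nat \<times> nat) \<times> (nat \<times> nat)) set" where
  "theta_arcs ns =
     {((c, i), (c, Suc i)) | c i. c < length ns \<and> Suc i < ns ! c} \<union>
     {((c, 0), (c, ns ! c - 1)) | c. c < length ns}"

definition theta_oriented_2reg :: "'a set \<Rightarrow> ('a \<times> 'a) set \<Rightarrow> nat list \<Rightarrow> bool" where
  "theta_oriented_2reg V A ns \<longleftrightarrow>
     (\<forall>n\<in>set ns. 3 \<le> n) \<and> A \<subseteq> V \<times> V \<and>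
     (\<exists>\<phi>. bij_betw \<phi> V (theta_vertices ns) \<and>
        (\<forall>u\<in>V. \<forall>v\<in>V. (u, v) \<in> A \<longleftrightarrow> (\<phi> u, \<phi> v) \<in> theta_arcs ns))"

end

theory Submission
  imports Defs "HOL-Library.Product_Lexorder"
begin

definition rnk :: "'b set \<Rightarrow> ('b \<Rightarrow> 'k::linorder) \<Rightarrow> 'b \<Rightarrow> nat" where
  "rnk S K x = card {z\<in>S. K z < K x} + 1"

lemma rnk_mono:
  assumes "finite S" "x \<in> S" "y \<in> S" "K x < K y"
  shows "rnk S K x < rnk S K y"
proof -
  have "{z\<in>S. K z < K x} \<subset> {z\<in>S. K z < K y}"
    using assms by (auto intro: less_trans)
  then have "card {z\<in>S. K z < K x} < card {z\<in>S. K z < K y}"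
    using assms(1) by (intro psubset_card_mono) auto
  then show ?thesis unfolding rnk_def by simp
qed

lemma rnk_bij:
  assumes "finite S" "inj_on K S"
  shows "bij_betw (rnk S K) S {1..card S}"
proof -
  have inj: "inj_on (rnk S K) S"
  proof (rule inj_onI)
    fix x y assume xy: "x \<in> S" "y \<in> S" "rnk S K x = rnk S K y"
    show "x = y"
    proof (rule ccontr)
      assume "x \<noteq> y"
      then have "K x \<noteq> K y" using assms(2) xy by (auto dest: inj_onD)
      then have "K x < K y \<or> K y < K x" by auto
      then show False using rnk_mono[OF assms(1)] xy by (metis less_irrefl)
    qed
  qed
  have sub: "rnk S K ` S \<subseteq> {1..card S}"
  proof
    fix r assume "r \<in> rnk S K ` S"
    then obtain x where x: "x \<in> S" "r = rnk S K x" by auto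
    have "{z\<in>S. K z < K x} \<subset> S" using x by auto
    then have "card {z\<in>S. K z < K x} < card S" using assms(1) by (intro psubset_card_mono) auto
    then show "r \<in> {1..card S}" using x unfolding rnk_def by auto
  qed
  have "card (rnk S K ` S) = card {1..card S}"
    using card_image[OF inj] by simp
  then have "rnk S K ` S = {1..card S}"
    using sub by (intro card_subset_eq) auto
  then show ?thesis using inj unfolding bij_betw_def by auto
qed

lemma rnk_split:
  assumes "finite S" "K x \<le> K y"
  shows "rnk S K y = rnk S K x + card {z\<in>S. K x \<le> K z \<and> K z < K y}"
proof -
  have eq: "{z\<in>S. K z < K y} = {z\<in>S. K z < K x} \<union> {z\<in>S. K x \<le> K z \<and> K z < K y}"
    using assms(2) by (auto intro: less_le_trans)
  have "card {z\<in>S. K z < K y} = card {z\<in>S. K z < K x} + card {z\<in>S. K x \<le> K z \<and> K z < K y}"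
    unfolding eq using assms(1) by (intro card_Un_disjoint) auto
  then show ?thesis unfolding rnk_def by simp
qed

lemma mono_inj:
  fixes W :: "'b \<Rightarrow> nat" and K :: "'b \<Rightarrow> 'k::linorder"
  assumes "inj_on K S" "\<And>x y. x \<in> S \<Longrightarrow> y \<in> S \<Longrightarrow> K x < K y \<Longrightarrow> W x < W y"
  shows "inj_on W S"
proof (rule inj_onI)
  fix x y assume xy: "x \<in> S" "y \<in> S" "W x = W y"
  show "x = y"
  proof (rule ccontr)
    assume "x \<noteq> y"
    then have "K x \<noteq> K y" using assms(1) xy by (auto dest: inj_onD)
    then have "K x < K y \<or> K y < K x" by auto
    then show False using assms(2) xy by (metis less_irrefl)
  qed
qed

lemma sum_cmp:
  fixes a b :: "nat \<Rightarrow> nat"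
  assumes "finite B" "A \<subseteq> B" "\<And>d. d \<in> A \<Longrightarrow> a d \<le> b d"
  shows "sum a A \<le> sum b B"
proof -
  have "sum a A \<le> sum b A" using assms(3) by (rule sum_mono)
  also have "\<dots> \<le> sum b B" using assms(1,2) by (intro sum_mono2) auto
  finally show ?thesis .
qed

lemma sum_cmp_strict:
  fixes a b :: "nat \<Rightarrow> nat"
  assumes "finite B" "A \<subseteq> B" "\<And>d. d \<in> A \<Longrightarrow> a d \<le> b d"
    and "(e \<in> A \<and> a e < b e) \<or> (e \<in> B - A \<and> 0 < b e)"
  shows "sum a A < sum b B"
proof (cases "e \<in> A \<and> a e < b e")
  case True
  have fA: "finite A" using assms(1,2) finite_subset by blast
  have "sum a A < sum b A" using True assms(3) fA by (intro sum_strict_mono_ex1) auto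
  also have "\<dots> \<le> sum b B" using assms(1,2) by (intro sum_mono2) auto
  finally show ?thesis .
next
  case False
  then have e: "e \<in> B - A" "0 < b e" using assms(4) by auto
  have "sum a A \<le> sum b A" using assms(3) by (rule sum_mono)
  also have "sum b A < sum b A + b e" using e by simp
  also have "\<dots> = sum b (insert e A)" using e assms(1,2) finite_subset by (subst sum.insert) auto
  also have "\<dots> \<le> sum b B" using assms(1,2) e by (intro sum_mono2) auto
  finally show ?thesis .
qed

definition crk :: "(nat \<Rightarrow> nat \<Rightarrow> bool) \<Rightarrow> nat \<Rightarrow> nat \<Rightarrow> nat" where
  "crk R s c = card {c'. c' < s \<and> R c' c}"

context
  fixes R :: "nat \<Rightarrow> nat \<Rightarrow> bool" and s :: nat
  assumes irr: "\<And>c. \<not> R c c"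
    and tr: "\<And>a b c. R a b \<Longrightarrow> R b c \<Longrightarrow> R a c"
    and tot: "\<And>a b. a \<noteq> b \<Longrightarrow> R a b \<or> R b a"
begin

lemma crk_less: assumes "c1 < s" "R c1 c2" shows "crk R s c1 < crk R s c2"
proof -
  have "{c'. c' < s \<and> R c' c1} \<subset> {c'. c' < s \<and> R c' c2}"
  proof
    show "{c'. c' < s \<and> R c' c1} \<subseteq> {c'. c' < s \<and> R c' c2}" using assms tr by blast
    have "c1 \<in> {c'. c' < s \<and> R c' c2}" "c1 \<notin> {c'. c' < s \<and> R c' c1}" using assms irr by auto
    then show "{c'. c' < s \<and> R c' c1} \<noteq> {c'. c' < s \<and> R c' c2}" by blast
  qed
  then show ?thesis unfolding crk_def by (intro psubset_card_mono) auto
qed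

lemma crk_less_iff: assumes "c1 < s" "c2 < s" shows "crk R s c1 < crk R s c2 \<longleftrightarrow> R c1 c2"
proof
  assume "crk R s c1 < crk R s c2"
  then show "R c1 c2" using tot[of c1 c2] crk_less[of c2 c1] assms by (metis less_asym less_irrefl)
qed (use crk_less assms in auto)

lemma crk_inj: assumes "c1 < s" "c2 < s" "crk R s c1 = crk R s c2" shows "c1 = c2"
  using crk_less_iff[OF assms(1,2)] crk_less_iff[OF assms(2,1)] tot assms(3) by force

lemma crk_lt: assumes "c < s" shows "crk R s c < s"
proof -
  have "{c'. c' < s \<and> R c' c} \<subset> {..<s}" using assms irr by auto
  then have "card {c'. c' < s \<and> R c' c} < card {..<s}" by (intro psubset_card_mono) auto
  then show ?thesis unfolding crk_def by simp
qed

lemma card_crk_less: assumes "c < s" shows "card {c'. c' < s \<and> crk R s c' < crk R s c} = crk R s c"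
proof -
  have "{c'. c' < s \<and> crk R s c' < crk R s c} = {c'. c' < s \<and> R c' c}"
    using crk_less_iff assms by auto
  then show ?thesis unfolding crk_def by simp
qed

lemma card_crk_le: assumes "c < s" shows "card {c'. c' < s \<and> crk R s c' \<le> crk R s c} = crk R s c + 1"
proof -
  have "{c'. c' < s \<and> crk R s c' \<le> crk R s c} = insert c {c'. c' < s \<and> crk R s c' < crk R s c}"
    using crk_inj assms by (auto simp: le_less)
  moreover have "c \<notin> {c'. c' < s \<and> crk R s c' < crk R s c}" by auto
  ultimately show ?thesis using card_crk_less[OF assms] by simp
qed

end

definition Rd :: "nat list \<Rightarrow> nat \<Rightarrow> nat \<Rightarrow> bool" where
  "Rd ns a b \<longleftrightarrow> ns ! b < ns ! a \<or> (ns ! a = ns ! b \<and> a < b)"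
definition Ra :: "nat list \<Rightarrow> nat \<Rightarrow> nat \<Rightarrow> bool" where
  "Ra ns a b \<longleftrightarrow> ns ! a < ns ! b \<or> (ns ! a = ns ! b \<and> a < b)"

lemma Rd_props: "\<And>c. \<not> Rd ns c c" "\<And>a b c. Rd ns a b \<Longrightarrow> Rd ns b c \<Longrightarrow> Rd ns a c"
  "\<And>a b. a \<noteq> b \<Longrightarrow> Rd ns a b \<or> Rd ns b a"
  unfolding Rd_def by auto
lemma Ra_props: "\<And>c. \<not> Ra ns c c" "\<And>a b c. Ra ns a b \<Longrightarrow> Ra ns b c \<Longrightarrow> Ra ns a c"
  "\<And>a b. a \<noteq> b \<Longrightarrow> Ra ns a b \<or> Ra ns b a"
  unfolding Ra_def by auto

lemmas crkd = crk_less_iff[OF Rd_props] crk_inj[OF Rd_props] crk_lt[OF Rd_props]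
   card_crk_less[OF Rd_props] card_crk_le[OF Rd_props]
lemmas crka = crk_less_iff[OF Ra_props] crk_inj[OF Ra_props] crk_lt[OF Ra_props]
   card_crk_less[OF Ra_props] card_crk_le[OF Ra_props]

definition Wl :: "nat list \<Rightarrow> nat set \<Rightarrow> (nat \<times> nat \<Rightarrow> nat) \<Rightarrow> nat \<times> nat \<Rightarrow> nat" where
  "Wl ns D g x = (if snd x + 1 = ns ! fst x then
      (if 0 \<in> D then g x else 0) + (\<Sum>d\<in>{d\<in>D. 1 \<le> d \<and> d + 2 \<le> ns ! fst x}. g (fst x, snd x - d))
       + (if 1 \<in> D then g (fst x, 0) else 0)
    else (\<Sum>d\<in>{d\<in>D. d \<le> snd x}. g (fst x, snd x - d)))"

lemma theta_vertices_eq: "theta_vertices ns = (SIGMA c:{..<length ns}. {..<ns!c})"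
  unfolding theta_vertices_def by auto

lemma finite_theta[simp]: "finite (theta_vertices ns)"
  unfolding theta_vertices_eq by auto

lemma mem_theta[simp]: "(c, i) \<in> theta_vertices ns \<longleftrightarrow> c < length ns \<and> i < ns ! c"
  unfolding theta_vertices_def by auto

lemma finD_le: "finite {d\<in>D. d \<le> (l::nat)}" by (rule finite_subset[of _ "{..l}"]) auto

lemma core_no1:
  assumes ge3: "\<forall>n\<in>set ns. 3 \<le> n" and D0: "0 \<in> D" and D1: "1 \<notin> D"
  shows "\<exists>g. bij_betw g (theta_vertices ns) {1..card (theta_vertices ns)} \<and> inj_on (Wl ns D g) (theta_vertices ns)"
proof -
  define s where "s = length ns"
  define L where "L = theta_vertices ns"
  define r where "r = crk (Ra ns) s"
  define K where "K x = (snd x, r (fst x))" for x :: "nat \<times> nat"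
  define g where "g = rnk L K"
  have finL: "finite L" unfolding L_def by simp
  have rinj: "\<And>a b. a < s \<Longrightarrow> b < s \<Longrightarrow> r a = r b \<Longrightarrow> a = b" unfolding r_def by (rule crka(2))
  have rless: "\<And>a b. a < s \<Longrightarrow> b < s \<Longrightarrow> r a < r b \<longleftrightarrow> Ra ns a b" unfolding r_def by (rule crka(1))
  have Kinj: "inj_on K L"
  proof (rule inj_onI)
    fix x y assume "x \<in> L" "y \<in> L" "K x = K y"
    then show "x = y" using rinj unfolding K_def L_def s_def by (cases x, cases y) auto
  qed
  have bij: "bij_betw g L {1..card L}" unfolding g_def by (rule rnk_bij[OF finL Kinj])
  have nge: "\<And>c. c < s \<Longrightarrow> 3 \<le> ns ! c" using ge3 unfolding s_def by auto
  define E where "E x = {d\<in>D. d \<le> snd x \<and> (snd x + 1 = ns ! fst x \<longrightarrow> d < snd x)}" for x :: "nat \<times> nat"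
  have finE: "finite (E x)" for x unfolding E_def by (rule finite_subset[OF _ finD_le[of D "snd x"]]) auto
  have Wrep: "Wl ns D g x = (\<Sum>d\<in>E x. g (fst x, snd x - d))" if "x \<in> L" for x
  proof (cases "snd x + 1 = ns ! fst x")
    case True
    have eq: "E x = insert 0 {d\<in>D. 1 \<le> d \<and> d + 2 \<le> ns ! fst x}"
    proof -
      have "fst x < s" using that unfolding L_def s_def by (cases x) auto
      then have "3 \<le> ns ! fst x" using nge by auto
      then show ?thesis using True D0 unfolding E_def by auto
    qed
    have fin: "finite {d\<in>D. 1 \<le> d \<and> d + 2 \<le> ns ! fst x}"
      by (rule finite_subset[of _ "{..ns ! fst x}"]) auto
    show ?thesis using True D0 D1 unfolding Wl_def eq
      by (subst sum.insert[OF fin]) auto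
  next
    case False
    then show ?thesis unfolding Wl_def E_def by simp
  qed
  have mono: "Wl ns D g x < Wl ns D g y" if xy: "x \<in> L" "y \<in> L" "K x < K y" for x y
  proof -
    obtain c1 l1 where x: "x = (c1, l1)" by (cases x)
    obtain c2 l2 where y: "y = (c2, l2)" by (cases y)
    have c1: "c1 < s" "l1 < ns ! c1" and c2: "c2 < s" "l2 < ns ! c2"
      using xy unfolding x y L_def s_def by auto
    have lv: "l1 < l2 \<or> (l1 = l2 \<and> r c1 < r c2)" using xy(3) unfolding K_def x y by auto
    have sub: "E x \<subseteq> E y"
    proof
      fix d assume d: "d \<in> E x"
      show "d \<in> E y"
      proof (cases "l1 < l2")
        case True then show ?thesis using d unfolding E_def x y by auto
      next
        case False
        then have eq: "l1 = l2" and rr: "r c1 < r c2" using lv by auto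
        have "Ra ns c1 c2" using rr rless c1 c2 by auto
        then have "ns ! c1 \<le> ns ! c2" unfolding Ra_def by auto
        then have "l2 + 1 = ns ! c2 \<longrightarrow> l1 + 1 = ns ! c1" using eq c1 by auto
        then show ?thesis using d eq unfolding E_def x y by auto
      qed
    qed
    have pt: "g (c1, l1 - d) < g (c2, l2 - d)" if d: "d \<in> E x" for d
    proof -
      have dl: "d \<le> l1" using d unfolding E_def x by auto
      have "l1 \<le> l2" using lv by auto
      have m1: "(c1, l1 - d) \<in> L" "(c2, l2 - d) \<in> L" using c1 c2 unfolding L_def s_def by auto
      have "K (c1, l1 - d) < K (c2, l2 - d)" using lv dl \<open>l1 \<le> l2\<close> unfolding K_def by auto
      then show ?thesis unfolding g_def by (rule rnk_mono[OF finL m1])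
    qed
    have "0 \<in> E x" using D0 nge[OF c1(1)] unfolding E_def x using c1 by auto
    have "(\<Sum>d\<in>E x. g (fst x, snd x - d)) < (\<Sum>d\<in>E y. g (fst y, snd y - d))"
      unfolding x y fst_conv snd_conv
      by (rule sum_cmp_strict[where e=0]) (use finE sub pt \<open>0 \<in> E x\<close> pt[OF \<open>0 \<in> E x\<close>] in \<open>auto simp: x y intro: less_imp_le\<close>)
    then show ?thesis using Wrep xy by simp
  qed
  have "inj_on (Wl ns D g) L" by (rule mono_inj[OF Kinj mono])
  then show ?thesis using bij unfolding L_def by blast
qed

lemma core_1:
  assumes ge3: "\<forall>n\<in>set ns. 3 \<le> n" and D0: "0 \<in> D" and D1: "1 \<in> D"
  shows "\<exists>g. bij_betw g (theta_vertices ns) {1..card (theta_vertices ns)} \<and> inj_on (Wl ns D g) (theta_vertices ns)"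
proof -
  define s where "s = length ns"
  define L where "L = theta_vertices ns"
  define r where "r = crk (Rd ns) s"
  define U where "U x \<longleftrightarrow> snd x + 1 = ns ! fst x \<and> snd x \<notin> D" for x :: "nat \<times> nat"
  define Kd where "Kd x = (snd x, (if U x then 0 else 1::nat, if U x then s - r (fst x) else r (fst x)))"
    for x :: "nat \<times> nat"
  define K' where "K' x = (snd x, r (fst x))" for x :: "nat \<times> nat"
  define g where "g = rnk L Kd"
  have finL: "finite L" unfolding L_def by simp
  have rinj: "\<And>a b. a < s \<Longrightarrow> b < s \<Longrightarrow> r a = r b \<Longrightarrow> a = b" unfolding r_def by (rule crkd(2))
  have rless: "\<And>a b. a < s \<Longrightarrow> b < s \<Longrightarrow> r a < r b \<longleftrightarrow> Rd ns a b" unfolding r_def by (rule crkd(1))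
  have rlt: "\<And>a. a < s \<Longrightarrow> r a < s" unfolding r_def by (rule crkd(3))
  have cless: "\<And>a. a < s \<Longrightarrow> card {c'. c' < s \<and> r c' < r a} = r a" unfolding r_def by (rule crkd(4))
  have cle: "\<And>a. a < s \<Longrightarrow> card {c'. c' < s \<and> r c' \<le> r a} = r a + 1" unfolding r_def by (rule crkd(5))
  have rle_len: "ns ! b \<le> ns ! a" if "a < s" "b < s" "r a \<le> r b" for a b
  proof (cases "a = b")
    case False
    then have "r a < r b" using that rinj by (auto simp: le_less)
    then show ?thesis using rless that unfolding Rd_def by auto
  qed simp
  have nge: "\<And>c. c < s \<Longrightarrow> 3 \<le> ns ! c" using ge3 unfolding s_def by auto
  have memL: "\<And>c l. (c, l) \<in> L \<longleftrightarrow> c < s \<and> l < ns ! c" unfolding L_def s_def by simp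
  have Kdinj: "inj_on Kd L"
  proof (rule inj_onI)
    fix x y assume xy: "x \<in> L" "y \<in> L" "Kd x = Kd y"
    obtain c1 l1 where x: "x = (c1, l1)" by (cases x)
    obtain c2 l2 where y: "y = (c2, l2)" by (cases y)
    have c: "c1 < s" "c2 < s" using xy memL x y by auto
    have "l1 = l2" "U x = U y" using xy(3) unfolding Kd_def x y by (auto split: if_splits)
    moreover have "r c1 = r c2" using xy(3) rlt[OF c(1)] rlt[OF c(2)] unfolding Kd_def x y
      by (auto split: if_splits)
    ultimately show "x = y" using rinj c x y by auto
  qed
  have K'inj: "inj_on K' L"
  proof (rule inj_onI)
    fix x y assume xy: "x \<in> L" "y \<in> L" "K' x = K' y"
    then show "x = y" using rinj memL unfolding K'_def by (cases x, cases y) auto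
  qed
  have bij: "bij_betw g L {1..card L}" unfolding g_def by (rule rnk_bij[OF finL Kdinj])
  have gpos: "\<And>x. 0 < g x" unfolding g_def rnk_def by simp
  have gmono: "\<And>x y. x \<in> L \<Longrightarrow> y \<in> L \<Longrightarrow> Kd x < Kd y \<Longrightarrow> g x < g y"
    unfolding g_def by (rule rnk_mono[OF finL])
  have gsplit: "\<And>x y. Kd x \<le> Kd y \<Longrightarrow> g y = g x + card {z\<in>L. Kd x \<le> Kd z \<and> Kd z < Kd y}"
    unfolding g_def by (rule rnk_split[OF finL])
  have Ulev: "\<And>x. U x \<Longrightarrow> snd x + 1 = ns ! fst x" unfolding U_def by auto
  have gsink: "g (c, 0) = r c + 1" if c: "c < s" for c
  proof -
    have nU: "\<And>c'. c' < s \<Longrightarrow> \<not> U (c', 0)" using nge unfolding U_def by fastforce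
    have "{z\<in>L. Kd z < Kd (c, 0)} = (\<lambda>c'. (c', 0::nat)) ` {c'. c' < s \<and> r c' < r c}"
    proof (rule set_eqI, rule iffI)
      fix z assume z: "z \<in> {z\<in>L. Kd z < Kd (c, 0)}"
      obtain c' l' where zz: "z = (c', l')" by (cases z)
      have c': "c' < s" "l' < ns ! c'" using z zz memL by auto
      have "l' = 0" and "r c' < r c" using z nU[OF c'(1)] nU[OF c] unfolding zz Kd_def
        by (auto split: if_splits)
      then show "z \<in> (\<lambda>c'. (c', 0::nat)) ` {c'. c' < s \<and> r c' < r c}" using zz c' by auto
    next
      fix z assume "z \<in> (\<lambda>c'. (c', 0::nat)) ` {c'. c' < s \<and> r c' < r c}"
      then obtain c' where z: "z = (c', 0)" "c' < s" "r c' < r c" by auto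
      then show "z \<in> {z\<in>L. Kd z < Kd (c, 0)}" using nU[OF z(2)] nU[OF c] nge[OF z(2)] memL
        unfolding Kd_def by auto
    qed
    moreover have "card ((\<lambda>c'. (c', 0::nat)) ` {c'. c' < s \<and> r c' < r c}) = r c"
      using cless[OF c] by (subst card_image) (auto simp: inj_on_def)
    ultimately show ?thesis unfolding g_def rnk_def by simp
  qed
  have FC: "g x + r (fst x) + 1 \<le> g z" if x: "x \<in> L" "U x" and z: "z \<in> L" "snd x < snd z" for x z
  proof -
    obtain c l where xx: "x = (c, l)" by (cases x)
    have c: "c < s" "l < ns ! c" using x memL xx by auto
    have le: "Kd x \<le> Kd z" using z unfolding Kd_def by auto
    define I where "I = {w\<in>L. Kd x \<le> Kd w \<and> Kd w < Kd z}"
    have "(\<lambda>c'. (c', l)) ` {c'. c' < s \<and> r c' \<le> r c} \<subseteq> I"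
    proof
      fix w assume "w \<in> (\<lambda>c'. (c', l)) ` {c'. c' < s \<and> r c' \<le> r c}"
      then obtain c' where w: "w = (c', l)" "c' < s" "r c' \<le> r c" by auto
      have "ns ! c \<le> ns ! c'" using rle_len[OF w(2) c(1) w(3)] .
      then have wL: "w \<in> L" using w c memL by auto
      have "Kd x \<le> Kd w"
      proof (cases "U w")
        case True
        then show ?thesis using x(2) w(3) rlt[OF c(1)] unfolding Kd_def xx w by auto
      next
        case False
        then show ?thesis using x(2) unfolding Kd_def xx w by auto
      qed
      moreover have "Kd w < Kd z" using z unfolding Kd_def xx w by auto
      ultimately show "w \<in> I" using wL unfolding I_def by auto
    qed
    then have "card ((\<lambda>c'. (c', l)) ` {c'. c' < s \<and> r c' \<le> r c}) \<le> card I"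
      by (rule card_mono[rotated]) (auto simp: I_def finL)
    moreover have "card ((\<lambda>c'. (c', l)) ` {c'. c' < s \<and> r c' \<le> r c}) = r c + 1"
      using cle[OF c(1)] by (subst card_image) (auto simp: inj_on_def)
    ultimately show ?thesis using gsplit[OF le] unfolding I_def xx by simp
  qed
  have FB: "g z \<le> g x + r (fst x) + 1" if x: "x \<in> L" "U x" and z: "z \<in> L" "\<not> U z" "K' z < K' x" for x z
  proof (cases "Kd z \<le> Kd x")
    case True
    then show ?thesis using gsplit[OF True] by simp
  next
    case False
    then have lt: "Kd x < Kd z" by auto
    obtain c l where xx: "x = (c, l)" by (cases x)
    obtain cz lz where zz: "z = (cz, lz)" by (cases z)
    have c: "c < s" "l < ns ! c" using x memL xx by auto
    have cz: "cz < s" "lz < ns ! cz" using z memL zz by auto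
    have "l \<le> lz" using lt unfolding Kd_def xx zz by auto
    moreover have "lz \<le> l" using z(3) unfolding K'_def xx zz by auto
    ultimately have lz: "lz = l" by simp
    have rz: "r cz < r c" using z(3) lz unfolding K'_def xx zz by auto
    define I where "I = {w\<in>L. Kd x \<le> Kd w \<and> Kd w < Kd z}"
    have Ilev: "snd w = l" if "w \<in> I" for w
    proof -
      have "l \<le> snd w" "snd w \<le> lz" using that unfolding I_def Kd_def xx zz by auto
      then show ?thesis using lz by simp
    qed
    have "inj_on fst I"
      by (rule inj_onI) (metis Ilev prod.collapse)
    moreover have "fst ` I \<subseteq> {c'. c' < s \<and> r c' \<le> r c}"
    proof
      fix c' assume "c' \<in> fst ` I"
      then obtain w where w: "w \<in> I" "c' = fst w" by auto
      have wl: "w = (c', l)" using Ilev[OF w(1)] w(2) by (cases w) auto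
      have c'L: "c' < s" using w(1) wl memL unfolding I_def by auto
      have "r c' \<le> r c"
      proof (cases "U w")
        case True
        have "Kd x \<le> Kd w" using w(1) unfolding I_def by auto
        then have "s - r c \<le> s - r c'" using True x(2) unfolding Kd_def xx wl by auto
        then show ?thesis using rlt[OF c(1)] rlt[OF c'L] by linarith
      next
        case False
        have "Kd w < Kd z" using w(1) unfolding I_def by auto
        then have "r c' < r cz" using False z(2) lz unfolding Kd_def zz wl by auto
        then show ?thesis using rz by simp
      qed
      then show "c' \<in> {c'. c' < s \<and> r c' \<le> r c}" using c'L by auto
    qed
    ultimately have "card I \<le> r c + 1"
      using cle[OF c(1)] card_inj_on_le[of fst I "{c'. c' < s \<and> r c' \<le> r c}"] by auto
    then show ?thesis using gsplit[of x z] lt unfolding I_def xx by simp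
  qed
  have FD: "g x + r (fst x) \<le> g y + r (fst y)"
    if x: "x \<in> L" "U x" and y: "y \<in> L" "U y" and lv: "snd x = snd y" and rr: "r (fst x) < r (fst y)" for x y
  proof -
    obtain c1 l where xx: "x = (c1, l)" by (cases x)
    obtain c2 where yy: "y = (c2, l)" using lv xx by (cases y) auto
    have c1: "c1 < s" using x memL xx by auto
    have c2: "c2 < s" using y memL yy by auto
    have lt: "Kd y < Kd x" using x(2) y(2) rr rlt[OF c1] rlt[OF c2] unfolding Kd_def xx yy by auto
    define I where "I = {w\<in>L. Kd y \<le> Kd w \<and> Kd w < Kd x}"
    have Iw: "snd w = l \<and> U w \<and> r (fst x) < r (fst w) \<and> r (fst w) \<le> r (fst y) \<and> fst w < s" if "w \<in> I" for w
    proof -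
      obtain cw lw where ww: "w = (cw, lw)" by (cases w)
      have cw: "cw < s" using that memL ww unfolding I_def by auto
      have a: "Kd y \<le> Kd w" "Kd w < Kd x" using that unfolding I_def by auto
      have "lw = l" using a unfolding Kd_def xx yy ww by auto
      moreover have "U w" using a x(2) y(2) unfolding Kd_def xx yy ww by (auto split: if_splits)
      moreover have "s - r c2 \<le> s - r cw" "s - r cw < s - r c1"
        using a x(2) y(2) \<open>U w\<close> \<open>lw = l\<close> unfolding Kd_def xx yy ww by auto
      ultimately show ?thesis using rlt[OF c1] rlt[OF c2] rlt[OF cw] cw unfolding ww xx yy by auto
    qed
    have "inj_on (\<lambda>w. r (fst w)) I"
    proof (rule inj_onI)
      fix w w' assume "w \<in> I" "w' \<in> I" "r (fst w) = r (fst w')"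
      then show "w = w'" using Iw rinj by (metis prod.collapse)
    qed
    moreover have "(\<lambda>w. r (fst w)) ` I \<subseteq> {r (fst x)<..r (fst y)}" using Iw by auto
    ultimately have "card I \<le> r (fst y) - r (fst x)"
      using card_inj_on_le[of "\<lambda>w. r (fst w)" I "{r (fst x)<..r (fst y)}"] by auto
    then show ?thesis using gsplit[of y x] lt rr unfolding I_def by simp
  qed
  define A where "A x = (if U x then {d\<in>D. 1 \<le> d \<and> d + 2 \<le> ns ! fst x} else {d\<in>D. 1 \<le> d \<and> d \<le> snd x})"
    for x :: "nat \<times> nat"
  define Y where "Y x = (if U x then g x + g (fst x, 0) else g x)" for x :: "nat \<times> nat"
  have finA: "finite (A x)" for x unfolding A_def
    by (auto intro: finite_subset[of _ "{..ns ! fst x}"] finite_subset[of _ "{..snd x}"])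
  have Wrep: "Wl ns D g x = Y x + (\<Sum>d\<in>A x. g (fst x, snd x - d))" if "x \<in> L" for x
  proof -
    obtain c l where xx: "x = (c, l)" by (cases x)
    have c: "c < s" "l < ns ! c" using that memL xx by auto
    have n3: "3 \<le> ns ! c" using nge[OF c(1)] .
    show ?thesis
    proof (cases "l + 1 = ns ! c")
      case src: True
      show ?thesis
      proof (cases "l \<in> D")
        case True
        then have nU: "\<not> U x" unfolding U_def xx by auto
        have fin: "finite {d\<in>D. 1 \<le> d \<and> d + 2 \<le> ns ! c}"
          by (rule finite_subset[of _ "{..ns ! c}"]) auto
        have eq: "{d\<in>D. 1 \<le> d \<and> d \<le> l} = insert l {d\<in>D. 1 \<le> d \<and> d + 2 \<le> ns ! c}"
          using True src n3 by auto
        have "l \<notin> {d\<in>D. 1 \<le> d \<and> d + 2 \<le> ns ! c}" using src by auto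
        then have ins: "(\<Sum>d\<in>insert l {d\<in>D. 1 \<le> d \<and> d + 2 \<le> ns ! c}. g (c, l - d)) =
            g (c, 0) + (\<Sum>d\<in>{d\<in>D. 1 \<le> d \<and> d + 2 \<le> ns ! c}. g (c, l - d))"
          by (subst sum.insert[OF fin]) auto
        have a: "A x = insert l {d\<in>D. 1 \<le> d \<and> d + 2 \<le> ns ! c}" using nU eq unfolding A_def xx by simp
        have "Wl ns D g x = g x + (\<Sum>d\<in>{d\<in>D. 1 \<le> d \<and> d + 2 \<le> ns ! c}. g (c, l - d)) + g (c, 0)"
          using src D0 D1 unfolding Wl_def xx by simp
        then show ?thesis using nU ins unfolding Y_def a by (simp add: xx)
      next
        case False
        then have "U x" unfolding U_def xx using src by auto
        then show ?thesis using src D0 D1 unfolding Wl_def A_def Y_def xx by (simp add: algebra_simps)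
      qed
    next
      case False
      then have nU: "\<not> U x" unfolding U_def xx by auto
      have fin: "finite {d\<in>D. 1 \<le> d \<and> d \<le> l}" by (rule finite_subset[of _ "{..l}"]) auto
      have eq: "{d\<in>D. d \<le> l} = insert 0 {d\<in>D. 1 \<le> d \<and> d \<le> l}" using D0 by auto
      show ?thesis using False nU unfolding Wl_def A_def Y_def xx fst_conv snd_conv eq
        by (simp add: sum.insert[OF fin])
    qed
  qed
  have SF: "g (fst x, snd x - d) < g (fst y, snd y - d)"
    if xy: "x \<in> L" "y \<in> L" "K' x < K' y" and d: "1 \<le> d" "d \<le> snd x" for x y d
  proof -
    obtain c1 l1 where xx: "x = (c1, l1)" by (cases x)
    obtain c2 l2 where yy: "y = (c2, l2)" by (cases y)
    have c1: "c1 < s" "l1 < ns ! c1" using xy memL xx by auto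
    have c2: "c2 < s" "l2 < ns ! c2" using xy memL yy by auto
    have lv: "l1 < l2 \<or> (l1 = l2 \<and> r c1 < r c2)" using xy(3) unfolding K'_def xx yy by auto
    have m: "(c1, l1 - d) \<in> L" "(c2, l2 - d) \<in> L" using c1 c2 memL by auto
    have nU: "\<not> U (c1, l1 - d)" "\<not> U (c2, l2 - d)" using c1 c2 d lv unfolding U_def xx by auto
    have "Kd (c1, l1 - d) < Kd (c2, l2 - d)" using nU lv d unfolding Kd_def xx by auto
    then show ?thesis using gmono[OF m] unfolding xx yy by simp
  qed
  have Asub: "A x \<subseteq> A y" if xy: "x \<in> L" "y \<in> L" "K' x < K' y" for x y
  proof
    fix d assume d: "d \<in> A x"
    have le: "snd x \<le> snd y" using xy(3) unfolding K'_def by auto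
    have dl: "d \<le> snd x" "d \<in> D" "1 \<le> d" using d Ulev[of x] unfolding A_def by (auto split: if_splits)
    show "d \<in> A y"
    proof (cases "U y")
      case True
      then have "snd y \<notin> D" "snd y + 1 = ns ! fst y" unfolding U_def by auto
      then show ?thesis using True dl le unfolding A_def by (cases "d = snd y") auto
    next
      case False
      then show ?thesis using dl le unfolding A_def by auto
    qed
  qed
  have mono: "Wl ns D g x < Wl ns D g y" if xy: "x \<in> L" "y \<in> L" "K' x < K' y" for x y
  proof -
    obtain c1 l1 where xx: "x = (c1, l1)" by (cases x)
    obtain c2 l2 where yy: "y = (c2, l2)" by (cases y)
    have c1: "c1 < s" "l1 < ns ! c1" using xy memL xx by auto
    have c2: "c2 < s" "l2 < ns ! c2" using xy memL yy by auto
    have pt: "\<And>d. d \<in> A x \<Longrightarrow> g (fst x, snd x - d) \<le> g (fst y, snd y - d)"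
      using SF[OF xy] Ulev unfolding A_def by (fastforce split: if_splits intro: less_imp_le)
    have sle: "(\<Sum>d\<in>A x. g (fst x, snd x - d)) \<le> (\<Sum>d\<in>A y. g (fst y, snd y - d))"
      by (rule sum_cmp[OF finA Asub[OF xy] pt])
    have sstrict: "(\<Sum>d\<in>A x. g (fst x, snd x - d)) < (\<Sum>d\<in>A y. g (fst y, snd y - d))"
      if one: "1 \<in> A y"
    proof (rule sum_cmp_strict[where e=1, OF finA Asub[OF xy] pt])
      show "(1 \<in> A x \<and> g (fst x, snd x - 1) < g (fst y, snd y - 1)) \<or>
            (1 \<in> A y - A x \<and> 0 < g (fst y, snd y - 1))"
      proof (cases "1 \<in> A x")
        case True
        then have "1 \<le> snd x" using Ulev[of x] unfolding A_def by (auto split: if_splits)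
        then show ?thesis using True SF[OF xy, of 1] by auto
      qed (use one gpos in auto)
    qed
    have Wx: "Wl ns D g x = Y x + (\<Sum>d\<in>A x. g (fst x, snd x - d))" using Wrep xy by auto
    have Wy: "Wl ns D g y = Y y + (\<Sum>d\<in>A y. g (fst y, snd y - d))" using Wrep xy by auto
    have lv: "l1 < l2 \<or> (l1 = l2 \<and> r c1 < r c2)" using xy(3) unfolding K'_def xx yy by auto
    show ?thesis
    proof (cases "U x")
      case Ux: True
      have 1: "1 \<in> A y"
      proof (cases "U y")
        case True then show ?thesis using D1 nge[OF c2(1)] unfolding A_def yy by auto
      next
        case False
        have "1 \<le> l2" using lv Ux nge[OF c1(1)] Ulev[OF Ux] unfolding xx by auto
        then show ?thesis using False D1 unfolding A_def yy by auto
      qed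
      have Yle: "Y x \<le> Y y"
      proof (cases "U y")
        case Uy: True
        show ?thesis
        proof (cases "l1 < l2")
          case True
          have "g x + r c1 + 1 \<le> g y" using FC[OF xy(1) Ux xy(2)] True unfolding xx yy by simp
          then show ?thesis using Ux Uy gsink[OF c1(1)] gsink[OF c2(1)] unfolding Y_def xx yy by simp
        next
          case False
          then have "l1 = l2" "r c1 < r c2" using lv by auto
          then have "g x + r c1 \<le> g y + r c2" using FD[OF xy(1) Ux xy(2) Uy] unfolding xx yy by simp
          then show ?thesis using Ux Uy gsink[OF c1(1)] gsink[OF c2(1)] unfolding Y_def xx yy by simp
        qed
      next
        case nUy: False
        have "l1 < l2"
        proof (rule ccontr)
          assume "\<not> l1 < l2"
          then have eq: "l1 = l2" "r c1 < r c2" using lv by auto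
          then have "Rd ns c1 c2" using rless c1 c2 by auto
          then have "ns ! c2 \<le> ns ! c1" unfolding Rd_def by auto
          moreover have "l1 + 1 = ns ! c1" "l1 \<notin> D" using Ux unfolding U_def xx by auto
          ultimately have "U y" using eq c2 unfolding U_def yy by auto
          then show False using nUy by simp
        qed
        then have "g x + r c1 + 1 \<le> g y" using FC[OF xy(1) Ux xy(2)] unfolding xx yy by simp
        then show ?thesis using Ux nUy gsink[OF c1(1)] unfolding Y_def xx yy by simp
      qed
      show ?thesis using Wx Wy Yle sstrict[OF 1] by simp
    next
      case nUx: False
      show ?thesis
      proof (cases "U y")
        case Uy: True
        have 1: "1 \<in> A y" using Uy D1 nge[OF c2(1)] unfolding A_def yy by auto
        have "g x \<le> g y + r c2 + 1" using FB[OF xy(2) Uy xy(1) nUx xy(3)] unfolding yy by simp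
        then have "Y x \<le> Y y" using nUx Uy gsink[OF c2(1)] unfolding Y_def yy by simp
        then show ?thesis using Wx Wy sstrict[OF 1] by simp
      next
        case nUy: False
        have "Kd x < Kd y" using nUx nUy lv unfolding Kd_def xx yy by auto
        then have "Y x < Y y" using gmono[OF xy(1,2)] nUx nUy unfolding Y_def by simp
        then show ?thesis using Wx Wy sle by simp
      qed
    qed
  qed
  have "inj_on (Wl ns D g) L" by (rule mono_inj[OF K'inj mono])
  then show ?thesis using bij unfolding L_def by blast
qed

lemma arc_iff: "((a, b), (a', b')) \<in> theta_arcs ns \<longleftrightarrow>
    a < length ns \<and> a' = a \<and> ((b' = Suc b \<and> Suc b < ns ! a) \<or> (b = 0 \<and> b' = ns ! a - 1))"
  unfolding theta_arcs_def by auto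

lemma relpow_theta:
  assumes ge3: "\<forall>n\<in>set ns. 3 \<le> n" and x: "(c, i) \<in> theta_vertices ns"
  shows "((c, i), y) \<in> theta_arcs ns ^^ k \<longleftrightarrow>
    (y = (c, i + k) \<and> i + k < ns ! c) \<or> (i = 0 \<and> k = 1 \<and> y = (c, ns ! c - 1))"
proof (induction k arbitrary: y)
  case 0
  then show ?case using x by auto
next
  case (Suc k)
  have c: "c < length ns" "i < ns ! c" using x by auto
  have n3: "3 \<le> ns ! c" using ge3 c by auto
  have "((c, i), y) \<in> theta_arcs ns ^^ Suc k \<longleftrightarrow> (\<exists>z. ((c, i), z) \<in> theta_arcs ns ^^ k \<and> (z, y) \<in> theta_arcs ns)"
    by auto
  also have "\<dots> \<longleftrightarrow> (\<exists>z. ((z = (c, i + k) \<and> i + k < ns ! c) \<or> (i = 0 \<and> k = 1 \<and> z = (c, ns ! c - 1)))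
        \<and> (z, y) \<in> theta_arcs ns)"
    using Suc.IH by simp
  also have "\<dots> \<longleftrightarrow> (y = (c, i + Suc k) \<and> i + Suc k < ns ! c) \<or> (i = 0 \<and> Suc k = 1 \<and> y = (c, ns ! c - 1))"
  proof
    assume "\<exists>z. ((z = (c, i + k) \<and> i + k < ns ! c) \<or> (i = 0 \<and> k = 1 \<and> z = (c, ns ! c - 1)))
        \<and> (z, y) \<in> theta_arcs ns"
    then obtain z where z: "(z = (c, i + k) \<and> i + k < ns ! c) \<or> (i = 0 \<and> k = 1 \<and> z = (c, ns ! c - 1))"
      and zy: "(z, y) \<in> theta_arcs ns" by blast
    obtain y1 y2 where yy: "y = (y1, y2)" by (cases y)
    show "(y = (c, i + Suc k) \<and> i + Suc k < ns ! c) \<or> (i = 0 \<and> Suc k = 1 \<and> y = (c, ns ! c - 1))"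
      using z zy n3 unfolding yy by (auto simp: arc_iff)
  next
    assume a: "(y = (c, i + Suc k) \<and> i + Suc k < ns ! c) \<or> (i = 0 \<and> Suc k = 1 \<and> y = (c, ns ! c - 1))"
    show "\<exists>z. ((z = (c, i + k) \<and> i + k < ns ! c) \<or> (i = 0 \<and> k = 1 \<and> z = (c, ns ! c - 1)))
        \<and> (z, y) \<in> theta_arcs ns"
      using a c n3 by (intro exI[of _ "(c, i + k)"]) (auto simp: arc_iff)
  qed
  finally show ?case .
qed

definition tdist :: "nat list \<Rightarrow> nat \<times> nat \<Rightarrow> nat \<times> nat \<Rightarrow> enat" where
  "tdist ns x y = (if fst y = fst x \<and> ((1 \<le> snd x \<and> snd x \<le> snd y \<and> snd y < ns ! fst x)
        \<or> (snd x = 0 \<and> snd y + 1 < ns ! fst x)) then enat (snd y - snd x)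
     else if fst y = fst x \<and> snd x = 0 \<and> snd y + 1 = ns ! fst x then enat 1 else \<infinity>)"

lemma odist_theta:
  assumes ge3: "\<forall>n\<in>set ns. 3 \<le> n" and x: "x \<in> theta_vertices ns"
  shows "odist (theta_arcs ns) x y = tdist ns x y"
proof -
  obtain c i where xx: "x = (c, i)" by (cases x)
  obtain c' j where yy: "y = (c', j)" by (cases y)
  have c: "c < length ns" "i < ns ! c" using x xx by auto
  have n3: "3 \<le> ns ! c" using ge3 c by auto
  have P: "((c, i), (c', j)) \<in> theta_arcs ns ^^ k \<longleftrightarrow>
      (c' = c \<and> j = i + k \<and> i + k < ns ! c) \<or> (i = 0 \<and> k = 1 \<and> c' = c \<and> j = ns ! c - 1)" for k
    using relpow_theta[OF ge3 x[unfolded xx], of "(c', j)" k] by auto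
  show ?thesis
  proof (cases "c' = c \<and> ((1 \<le> i \<and> i \<le> j \<and> j < ns ! c) \<or> (i = 0 \<and> j + 1 < ns ! c))")
    case True
    have ex: "((c, i), (c', j)) \<in> theta_arcs ns ^^ (j - i)" unfolding P using True by auto
    have "(LEAST k. ((c, i), (c', j)) \<in> theta_arcs ns ^^ k) = j - i"
    proof (rule Least_equality)
      show "((c, i), (c', j)) \<in> theta_arcs ns ^^ (j - i)" by (rule ex)
      fix k assume "((c, i), (c', j)) \<in> theta_arcs ns ^^ k"
      then show "j - i \<le> k" unfolding P using True by auto
    qed
    moreover have "((c, i), (c', j)) \<in> (theta_arcs ns)\<^sup>*" by (rule relpow_imp_rtrancl[OF ex])
    ultimately show ?thesis using True unfolding odist_def tdist_def xx yy fst_conv snd_conv by simp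
  next
    case F: False
    show ?thesis
    proof (cases "c' = c \<and> i = 0 \<and> j + 1 = ns ! c")
      case True
      have ex: "((c, i), (c', j)) \<in> theta_arcs ns ^^ 1" unfolding P using True by auto
      have "(LEAST k. ((c, i), (c', j)) \<in> theta_arcs ns ^^ k) = 1"
      proof (rule Least_equality)
        show "((c, i), (c', j)) \<in> theta_arcs ns ^^ 1" by (rule ex)
        fix k assume "((c, i), (c', j)) \<in> theta_arcs ns ^^ k"
        then have "(c' = c \<and> j = i + k \<and> i + k < ns ! c) \<or> (i = 0 \<and> k = 1 \<and> c' = c \<and> j = ns ! c - 1)"
          unfolding P .
        then show "1 \<le> k" using True n3 by (cases "k = 0") auto
      qed
      moreover have "((c, i), (c', j)) \<in> (theta_arcs ns)\<^sup>*" by (rule relpow_imp_rtrancl[OF ex])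
      ultimately show ?thesis using True F unfolding odist_def tdist_def xx yy fst_conv snd_conv by simp
    next
      case False
      have "((c, i), (c', j)) \<notin> theta_arcs ns ^^ k" for k
      proof
        assume "((c, i), (c', j)) \<in> theta_arcs ns ^^ k"
        then have "(c' = c \<and> j = i + k \<and> i + k < ns ! c) \<or> (i = 0 \<and> k = 1 \<and> c' = c \<and> j = ns ! c - 1)"
          unfolding P .
        then show False
        proof
          assume a: "c' = c \<and> j = i + k \<and> i + k < ns ! c"
          show False using F False a by (cases "i = 0") auto
        next
          assume a: "i = 0 \<and> k = 1 \<and> c' = c \<and> j = ns ! c - 1"
          show False using False a n3 by auto
        qed
      qed
      then have "((c, i), (c', j)) \<notin> (theta_arcs ns)\<^sup>*" by (auto simp: rtrancl_power)
      then show ?thesis using F False unfolding odist_def tdist_def xx yy fst_conv snd_conv by simp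
    qed
  qed
qed

definition lev :: "nat list \<Rightarrow> nat \<times> nat \<Rightarrow> nat \<times> nat" where
  "lev ns x = (fst x, if snd x = 0 then ns ! fst x - 1 else ns ! fst x - 1 - snd x)"

lemma lev_invol:
  assumes ge3: "\<forall>n\<in>set ns. 3 \<le> n" and x: "x \<in> theta_vertices ns"
  shows "lev ns x \<in> theta_vertices ns" "lev ns (lev ns x) = x"
proof -
  obtain c i where xx: "x = (c, i)" by (cases x)
  have c: "c < length ns" "i < ns ! c" using x xx by auto
  have n3: "3 \<le> ns ! c" using ge3 c by auto
  show "lev ns x \<in> theta_vertices ns" using c n3 unfolding lev_def xx by auto
  show "lev ns (lev ns x) = x" using c n3 unfolding lev_def xx by auto
qed

lemma lev_bij:
  assumes ge3: "\<forall>n\<in>set ns. 3 \<le> n"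
  shows "bij_betw (lev ns) (theta_vertices ns) (theta_vertices ns)"
  by (rule bij_betw_byWitness[where f'="lev ns"]) (use lev_invol[OF ge3] in auto)

lemma nbhd_theta:
  assumes ge3: "\<forall>n\<in>set ns. 3 \<le> n" and x: "x \<in> theta_vertices ns"
  shows "D_neighbourhood (theta_vertices ns) (theta_arcs ns) D x =
     {y \<in> theta_vertices ns. \<exists>k\<in>D. tdist ns x y = enat k}"
  unfolding D_neighbourhood_def using odist_theta[OF ge3 x] by simp

lemma weight_link:
  assumes ge3: "\<forall>n\<in>set ns. 3 \<le> n" and x: "x \<in> theta_vertices ns"
  shows "D_weight (theta_vertices ns) (theta_arcs ns) D (g \<circ> lev ns) x = Wl ns D g (lev ns x)"
proof -
  obtain c i where xx: "x = (c, i)" by (cases x)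
  have c: "c < length ns" "i < ns ! c" using x xx by auto
  have n3: "3 \<le> ns ! c" using ge3 c by auto
  define n where "n = ns ! c"
  have n3n: "3 \<le> n" using n3 unfolding n_def .
  have N: "D_neighbourhood (theta_vertices ns) (theta_arcs ns) D x =
     {y \<in> theta_vertices ns. \<exists>k\<in>D. tdist ns x y = enat k}" by (rule nbhd_theta[OF ge3 x])
  show ?thesis
  proof (cases "i = 0")
    case False
    have Neq: "{y \<in> theta_vertices ns. \<exists>k\<in>D. tdist ns x y = enat k} = (\<lambda>d. (c, i + d)) ` {d\<in>D. d \<le> n - 1 - i}"
    proof (rule set_eqI, rule iffI)
      fix y assume y: "y \<in> {y \<in> theta_vertices ns. \<exists>k\<in>D. tdist ns x y = enat k}"
      obtain c' j where yy: "y = (c', j)" by (cases y)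
      obtain k where k: "k \<in> D" "tdist ns x y = enat k" using y by auto
      have "c' = c \<and> i \<le> j \<and> j < n \<and> k = j - i" using k(2) False unfolding tdist_def xx yy n_def
        by (auto split: if_splits)
      then show "y \<in> (\<lambda>d. (c, i + d)) ` {d\<in>D. d \<le> n - 1 - i}" using k(1) unfolding yy
        by (intro image_eqI[of _ _ "j - i"]) auto
    next
      fix y assume "y \<in> (\<lambda>d. (c, i + d)) ` {d\<in>D. d \<le> n - 1 - i}"
      then obtain d where d: "y = (c, i + d)" "d \<in> D" "d \<le> n - 1 - i" by auto
      have "i + d < n" using d c n3 unfolding n_def by auto
      then have "tdist ns x y = enat d" using False unfolding tdist_def xx d(1) n_def by auto
      then show "y \<in> {y \<in> theta_vertices ns. \<exists>k\<in>D. tdist ns x y = enat k}"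
        using d \<open>i + d < n\<close> c unfolding n_def by auto
    qed
    have "D_weight (theta_vertices ns) (theta_arcs ns) D (g \<circ> lev ns) x
        = (\<Sum>y\<in>(\<lambda>d. (c, i + d)) ` {d\<in>D. d \<le> n - 1 - i}. g (lev ns y))"
      unfolding D_weight_def N Neq by simp
    also have "\<dots> = (\<Sum>d\<in>{d\<in>D. d \<le> n - 1 - i}. g (lev ns (c, i + d)))"
      by (subst sum.reindex) (auto simp: inj_on_def)
    also have "\<dots> = (\<Sum>d\<in>{d\<in>D. d \<le> n - 1 - i}. g (c, n - 1 - i - d))"
      using False unfolding lev_def n_def by (intro sum.cong) auto
    also have "\<dots> = Wl ns D g (lev ns x)"
      using False c n3 unfolding Wl_def lev_def xx n_def by auto
    finally show ?thesis .
  next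
    case True
    define J where "J = {j\<in>D. 1 \<le> j \<and> j + 2 \<le> n}"
    define Z where "Z = (if 0 \<in> D then {(c, 0::nat)} else {})"
    define O1 where "O1 = (if 1 \<in> D then {(c, n - 1)} else {})"
    have Neq: "{y \<in> theta_vertices ns. \<exists>k\<in>D. tdist ns x y = enat k} = Z \<union> (\<lambda>j. (c, j)) ` J \<union> O1"
    proof (rule set_eqI, rule iffI)
      fix y assume y: "y \<in> {y \<in> theta_vertices ns. \<exists>k\<in>D. tdist ns x y = enat k}"
      obtain c' j where yy: "y = (c', j)" by (cases y)
      obtain k where k: "k \<in> D" "tdist ns x y = enat k" using y by auto
      have "c' = c \<and> ((j + 1 < n \<and> k = j) \<or> (j + 1 = n \<and> k = 1))" using k(2) True
        unfolding tdist_def xx yy n_def by (auto split: if_splits)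
      then show "y \<in> Z \<union> (\<lambda>j. (c, j)) ` J \<union> O1" using k(1) unfolding yy Z_def J_def O1_def
        by (cases "j = 0") auto
    next
      fix y assume y: "y \<in> Z \<union> (\<lambda>j. (c, j)) ` J \<union> O1"
      have "n - 1 + 1 = n" using n3 unfolding n_def by simp
      have n3': "3 \<le> n" using n3 unfolding n_def .
      have td: "tdist ns x (c, j) = (if j + 1 < n then enat j else if j + 1 = n then enat 1 else \<infinity>)" for j
        using True unfolding tdist_def xx n_def by auto
      have cn: "(c, j) \<in> theta_vertices ns \<longleftrightarrow> j < n" for j using c unfolding n_def by simp
      consider (z) "y \<in> Z" | (j) "y \<in> (\<lambda>j. (c, j)) ` J" | (o) "y \<in> O1" using y by blast
      then show "y \<in> {y \<in> theta_vertices ns. \<exists>k\<in>D. tdist ns x y = enat k}"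
      proof cases
        case z
        then have "y = (c, 0)" "0 \<in> D" unfolding Z_def by (auto split: if_splits)
        then show ?thesis using td[of 0] cn[of 0] n3' by auto
      next
        case j
        then obtain d where "y = (c, d)" "d \<in> D" "d + 2 \<le> n" unfolding J_def by auto
        then show ?thesis using td[of d] cn[of d] by auto
      next
        case o
        then have "y = (c, n - 1)" "1 \<in> D" unfolding O1_def by (auto split: if_splits)
        then show ?thesis using td[of "n - 1"] cn[of "n - 1"] n3' by auto
      qed
    qed
    have finJ: "finite J" unfolding J_def by (rule finite_subset[of _ "{..n}"]) auto
    have dis1: "Z \<inter> (\<lambda>j. (c, j)) ` J = {}" unfolding Z_def J_def by auto
    have dis2: "(Z \<union> (\<lambda>j. (c, j)) ` J) \<inter> O1 = {}" using n3n unfolding Z_def J_def O1_def by auto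
    have sZ: "(\<Sum>y\<in>Z. g (lev ns y)) = (if 0 \<in> D then g (c, n - 1) else 0)"
      unfolding Z_def lev_def n_def by auto
    have sO: "(\<Sum>y\<in>O1. g (lev ns y)) = (if 1 \<in> D then g (c, 0) else 0)"
      using n3 unfolding O1_def lev_def n_def by auto
    have sJ: "(\<Sum>y\<in>(\<lambda>j. (c, j)) ` J. g (lev ns y)) = (\<Sum>d\<in>J. g (c, n - 1 - d))"
      by (subst sum.reindex) (auto simp: inj_on_def lev_def J_def n_def intro!: sum.cong)
    have "D_weight (theta_vertices ns) (theta_arcs ns) D (g \<circ> lev ns) x
        = (\<Sum>y\<in>Z \<union> (\<lambda>j. (c, j)) ` J \<union> O1. g (lev ns y))"
      unfolding D_weight_def N Neq by simp
    also have "\<dots> = (\<Sum>y\<in>Z. g (lev ns y)) + (\<Sum>y\<in>(\<lambda>j. (c, j)) ` J. g (lev ns y)) + (\<Sum>y\<in>O1. g (lev ns y))"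
      using dis1 dis2 finJ unfolding Z_def O1_def
      by (simp add: sum.union_disjoint)
    also have "\<dots> = Wl ns D g (lev ns x)"
      unfolding sZ sJ sO using True n3 unfolding Wl_def lev_def xx n_def J_def by simp
    finally show ?thesis .
  qed
qed

lemma theta_arcs_sub:
  assumes ge3: "\<forall>n\<in>set ns. 3 \<le> n"
  shows "theta_arcs ns \<subseteq> theta_vertices ns \<times> theta_vertices ns"
proof
  fix p assume p: "p \<in> theta_arcs ns"
  obtain a b a' b' where pp: "p = ((a, b), (a', b'))" by (metis prod.collapse)
  have a: "a < length ns" and "a' = a" and ab: "(b' = Suc b \<and> Suc b < ns ! a) \<or> (b = 0 \<and> b' = ns ! a - 1)"
    using p unfolding pp arc_iff by auto
  moreover have "3 \<le> ns ! a" using ge3 a by auto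
  ultimately show "p \<in> theta_vertices ns \<times> theta_vertices ns" unfolding pp by auto
qed

lemma relpow_transfer:
  assumes bij: "bij_betw \<phi> V V0" and AV: "A \<subseteq> V \<times> V" and A0V: "A0 \<subseteq> V0 \<times> V0"
    and arc: "\<forall>u\<in>V. \<forall>v\<in>V. (u, v) \<in> A \<longleftrightarrow> (\<phi> u, \<phi> v) \<in> A0"
    and u: "u \<in> V"
  shows "(u, v) \<in> A ^^ k \<longleftrightarrow> v \<in> V \<and> (\<phi> u, \<phi> v) \<in> A0 ^^ k"
proof (induction k arbitrary: v)
  case 0
  have "inj_on \<phi> V" using bij bij_betw_def by blast
  then show ?case using u by (auto dest: inj_onD)
next
  case (Suc k)
  show ?case
  proof
    assume "(u, v) \<in> A ^^ Suc k"
    then obtain w where w: "(u, w) \<in> A ^^ k" "(w, v) \<in> A" by auto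
    have "w \<in> V" "v \<in> V" using w(2) AV by auto
    then show "v \<in> V \<and> (\<phi> u, \<phi> v) \<in> A0 ^^ Suc k" using Suc.IH w arc by auto
  next
    assume a: "v \<in> V \<and> (\<phi> u, \<phi> v) \<in> A0 ^^ Suc k"
    then obtain y where y: "(\<phi> u, y) \<in> A0 ^^ k" "(y, \<phi> v) \<in> A0" by auto
    have "y \<in> V0" using y(2) A0V by auto
    then obtain w where w: "w \<in> V" "y = \<phi> w" using bij unfolding bij_betw_def by auto
    have "(u, w) \<in> A ^^ k" using Suc.IH y(1) w by auto
    moreover have "(w, v) \<in> A" using arc w a y(2) by auto
    ultimately show "(u, v) \<in> A ^^ Suc k" by auto
  qed
qed

lemma odist_transfer:
  assumes bij: "bij_betw \<phi> V V0" and AV: "A \<subseteq> V \<times> V" and A0V: "A0 \<subseteq> V0 \<times> V0"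
    and arc: "\<forall>u\<in>V. \<forall>v\<in>V. (u, v) \<in> A \<longleftrightarrow> (\<phi> u, \<phi> v) \<in> A0"
    and u: "u \<in> V" and v: "v \<in> V"
  shows "odist A u v = odist A0 (\<phi> u) (\<phi> v)"
proof -
  have P: "(u, v) \<in> A ^^ k \<longleftrightarrow> (\<phi> u, \<phi> v) \<in> A0 ^^ k" for k
    using relpow_transfer[OF bij AV A0V arc u] v by auto
  have "(u, v) \<in> A\<^sup>* \<longleftrightarrow> (\<phi> u, \<phi> v) \<in> A0\<^sup>*" using P by (simp add: rtrancl_power)
  then show ?thesis unfolding odist_def P by simp
qed

lemma nbhd_transfer:
  assumes bij: "bij_betw \<phi> V V0" and AV: "A \<subseteq> V \<times> V" and A0V: "A0 \<subseteq> V0 \<times> V0"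
    and arc: "\<forall>u\<in>V. \<forall>v\<in>V. (u, v) \<in> A \<longleftrightarrow> (\<phi> u, \<phi> v) \<in> A0"
    and u: "u \<in> V"
  shows "\<phi> ` D_neighbourhood V A D u = D_neighbourhood V0 A0 D (\<phi> u)"
proof
  show "\<phi> ` D_neighbourhood V A D u \<subseteq> D_neighbourhood V0 A0 D (\<phi> u)"
    using odist_transfer[OF bij AV A0V arc u] bij unfolding D_neighbourhood_def bij_betw_def by auto
next
  show "D_neighbourhood V0 A0 D (\<phi> u) \<subseteq> \<phi> ` D_neighbourhood V A D u"
  proof
    fix y assume y: "y \<in> D_neighbourhood V0 A0 D (\<phi> u)"
    then have "y \<in> V0" unfolding D_neighbourhood_def by auto
    then obtain v where v: "v \<in> V" "y = \<phi> v" using bij unfolding bij_betw_def by auto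
    then show "y \<in> \<phi> ` D_neighbourhood V A D u"
      using y odist_transfer[OF bij AV A0V arc u v(1)] unfolding D_neighbourhood_def by auto
  qed
qed

lemma weight_transfer:
  assumes bij: "bij_betw \<phi> V V0" and AV: "A \<subseteq> V \<times> V" and A0V: "A0 \<subseteq> V0 \<times> V0"
    and arc: "\<forall>u\<in>V. \<forall>v\<in>V. (u, v) \<in> A \<longleftrightarrow> (\<phi> u, \<phi> v) \<in> A0"
    and u: "u \<in> V"
  shows "D_weight V A D (f0 \<circ> \<phi>) u = D_weight V0 A0 D f0 (\<phi> u)"
proof -
  have sub: "D_neighbourhood V A D u \<subseteq> V" unfolding D_neighbourhood_def by auto
  have inj: "inj_on \<phi> (D_neighbourhood V A D u)"
    using bij sub unfolding bij_betw_def by (auto intro: inj_on_subset)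
  have "D_weight V0 A0 D f0 (\<phi> u) = (\<Sum>y\<in>\<phi> ` D_neighbourhood V A D u. f0 y)"
    unfolding D_weight_def nbhd_transfer[OF bij AV A0V arc u] ..
  also have "\<dots> = (\<Sum>x\<in>D_neighbourhood V A D u. f0 (\<phi> x))" by (rule sum.reindex[OF inj, unfolded comp_def])
  finally show ?thesis unfolding D_weight_def by simp
qed

theorem mainTheorem19:
  fixes V :: "'a set" and A :: "('a \<times> 'a) set" and ns :: "nat list" and D :: "nat set"
  assumes "theta_oriented_2reg V A ns"
    and "length ns \<ge> 2"
    and "distance_set V A D"
  shows "D_antimagic V A D \<longleftrightarrow> Min D = 0"
proof -
  define V0 where "V0 = theta_vertices ns"
  define A0 where "A0 = theta_arcs ns"
  have ge3: "\<forall>n\<in>set ns. 3 \<le> n" and AV: "A \<subseteq> V \<times> V" using assms(1) unfolding theta_oriented_2reg_def by auto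
  obtain \<phi> where bij: "bij_betw \<phi> V V0" and arc: "\<forall>u\<in>V. \<forall>v\<in>V. (u, v) \<in> A \<longleftrightarrow> (\<phi> u, \<phi> v) \<in> A0"
    using assms(1) unfolding theta_oriented_2reg_def V0_def A0_def by blast
  have A0V: "A0 \<subseteq> V0 \<times> V0" unfolding A0_def V0_def by (rule theta_arcs_sub[OF ge3])
  have finV0: "finite V0" unfolding V0_def by simp
  have finV: "finite V" using bij finV0 bij_betw_finite by blast
  have cardV: "card V = card V0" using bij bij_betw_same_card by blast
  have Dne: "D \<noteq> {}" using assms(3) unfolding distance_set_def by auto
  have "D \<subseteq> (\<lambda>p. the_enat (odist A (fst p) (snd p))) ` (V \<times> V)"
  proof
    fix k assume "k \<in> D"
    then obtain u v where "u \<in> V" "v \<in> V" "odist A u v = enat k" using assms(3) unfolding distance_set_def by blast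
    then show "k \<in> (\<lambda>p. the_enat (odist A (fst p) (snd p))) ` (V \<times> V)"
      by (intro image_eqI[of _ _ "(u, v)"]) auto
  qed
  then have finD: "finite D" using finV by (auto intro: finite_subset)
  have MinD: "Min D = 0 \<longleftrightarrow> 0 \<in> D"
  proof
    assume "Min D = 0" then show "0 \<in> D" using Min_in[OF finD Dne] by simp
  next
    assume "0 \<in> D" then show "Min D = 0" using Min_le[OF finD] by fastforce
  qed
  have Winv: "D_weight V A D f u = D_weight V0 A0 D (f \<circ> inv_into V \<phi>) (\<phi> u)" if u: "u \<in> V" for f u
  proof -
    have "D_weight V A D ((f \<circ> inv_into V \<phi>) \<circ> \<phi>) u = D_weight V0 A0 D (f \<circ> inv_into V \<phi>) (\<phi> u)"
      by (rule weight_transfer[OF bij AV A0V arc u])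
    moreover have "D_weight V A D ((f \<circ> inv_into V \<phi>) \<circ> \<phi>) u = D_weight V A D f u"
      unfolding D_weight_def
    proof (rule sum.cong)
      fix x assume "x \<in> D_neighbourhood V A D u"
      then have "x \<in> V" unfolding D_neighbourhood_def by auto
      then show "((f \<circ> inv_into V \<phi>) \<circ> \<phi>) x = f x" using bij unfolding bij_betw_def by auto
    qed simp
    ultimately show ?thesis by simp
  qed
  show ?thesis
  proof (cases "0 \<in> D")
    case True
    obtain g where g: "bij_betw g V0 {1..card V0}" "inj_on (Wl ns D g) V0"
      using core_no1[OF ge3 True] core_1[OF ge3 True] unfolding V0_def by (cases "1 \<in> D") auto
    have levb: "bij_betw (lev ns) V0 V0" unfolding V0_def by (rule lev_bij[OF ge3])
    define f where "f = (g \<circ> lev ns) \<circ> \<phi>"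
    have fb: "bij_betw f V {1..card V}" unfolding f_def cardV
      by (rule bij_betw_trans[OF bij bij_betw_trans[OF levb g(1)]])
    have W: "D_weight V A D f u = Wl ns D g (lev ns (\<phi> u))" if u: "u \<in> V" for u
    proof -
      have pu: "\<phi> u \<in> V0" using u bij unfolding bij_betw_def by auto
      show ?thesis unfolding f_def weight_transfer[OF bij AV A0V arc u]
        using weight_link[OF ge3 pu[unfolded V0_def]] unfolding A0_def V0_def .
    qed
    have "inj_on (D_weight V A D f) V"
    proof (rule inj_onI)
      fix u v assume uv: "u \<in> V" "v \<in> V" "D_weight V A D f u = D_weight V A D f v"
      have pu: "\<phi> u \<in> V0" "\<phi> v \<in> V0" using uv bij unfolding bij_betw_def by auto
      have lu: "lev ns (\<phi> u) \<in> V0" "lev ns (\<phi> v) \<in> V0" using pu levb unfolding bij_betw_def by auto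
      have "Wl ns D g (lev ns (\<phi> u)) = Wl ns D g (lev ns (\<phi> v))" using uv W by simp
      then have "lev ns (\<phi> u) = lev ns (\<phi> v)" using g(2) lu by (auto dest: inj_onD)
      then have "\<phi> u = \<phi> v" using levb pu unfolding bij_betw_def by (auto dest: inj_onD)
      then show "u = v" using bij uv unfolding bij_betw_def by (auto dest: inj_onD)
    qed
    then have "D_antimagic V A D" using fb unfolding D_antimagic_def D_antimagic_labeling_def by blast
    then show ?thesis using MinD True by simp
  next
    case False
    define s1 where "s1 = (0::nat, ns ! 0 - 1)"
    define s2 where "s2 = (1::nat, ns ! 1 - 1)"
    have n01: "3 \<le> ns ! 0" "3 \<le> ns ! 1"
    proof -
      have "ns ! 0 \<in> set ns" "ns ! 1 \<in> set ns" using assms(2) by (auto intro!: nth_mem)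
      then show "3 \<le> ns ! 0" "3 \<le> ns ! 1" using ge3 by auto
    qed
    have s12: "s1 \<in> V0" "s2 \<in> V0" "s1 \<noteq> s2" using n01 assms(2) unfolding s1_def s2_def V0_def by auto
    have emp: "D_neighbourhood V0 A0 D s = {}" if s: "s \<in> {s1, s2}" for s
    proof -
      have sV: "s \<in> V0" using s s12 by auto
      have "\<not> (tdist ns s y = enat k \<and> k \<in> D)" for y k
        using s False n01 unfolding tdist_def s1_def s2_def by (auto split: if_splits)
      then show ?thesis using nbhd_theta[OF ge3 sV[unfolded V0_def]] unfolding A0_def V0_def by auto
    qed
    define u1 where "u1 = inv_into V \<phi> s1"
    define u2 where "u2 = inv_into V \<phi> s2"
    have u12: "u1 \<in> V" "u2 \<in> V" "\<phi> u1 = s1" "\<phi> u2 = s2"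
      using s12 bij unfolding u1_def u2_def bij_betw_def by (auto intro: inv_into_into f_inv_into_f)
    have "u1 \<noteq> u2" using u12 s12 by auto
    have "\<not> D_antimagic V A D"
    proof
      assume "D_antimagic V A D"
      then obtain f where "inj_on (D_weight V A D f) V"
        unfolding D_antimagic_def D_antimagic_labeling_def by blast
      moreover have "D_weight V A D f u1 = 0" "D_weight V A D f u2 = 0"
        using Winv[OF u12(1), of f] Winv[OF u12(2), of f] emp u12 unfolding D_weight_def by auto
      ultimately have "u1 = u2" using u12(1,2) by (metis inj_onD)
      then show False using \<open>u1 \<noteq> u2\<close> by simp
    qed
    then show ?thesis using MinD False by simp
  qed
qed

end
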